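(* Let $\rho$ be any single-qubit density matrix and let $\Lambda$ be any incoherent operation (IO) on a qubit. Then there exists a strictly incoherent operation (SIO) $\Lambda'$ on a qubit with $\Lambda'(\rho)=\Lambda(\rho)$. Consequently, for every single-qubit state $\rho$, the set $\{\Lambda(\rho):\Lambda \text{ an IO}\}$ equals the set $\{\Lambda(\rho):\Lambda\text{ an SIO}\}$.
   Context: Fix the computational (incoherent) basis $\{|0\rangle,|1\rangle\}$ of $\mathbb{C}^2$; a state is incoherent if it is diagonal in this basis. An incoherent operation (IO) is a quantum channel with Kraus operators $\{K_n\}$, $\sum_n K_n^\dagger K_n=I$, such that $K_n\delta K_n^\dagger$ is diagonal for every diagonal $\delta$ (equivalently, each $K_n$ has at most one nonzero entry in every column). A strictly incoherent operation (SIO) is an IO whose Kraus operators additionally satisfy that $K_n^\dagger\delta K_n$ is diagonal for every diagonal $\delta$ (equivalently, each $K_n$ has at most one nonzero entry in every row and every column). *)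

theory Defs
  imports "HOL-Analysis.Analysis"
begin

text \<open>Qubit operators: 2x2 complex matrices indexed by the two-element type 2,
  with index 1 playing the role of ket 0 and index 2 the role of ket 1.\<close>
type_synonym qmat = "complex ^ 2 ^ 2"

definition adjoint :: "qmat \<Rightarrow> qmat" where
  "adjoint A = (\<chi> i j. cnj (A $ j $ i))"

definition is_diagonal :: "qmat \<Rightarrow> bool" where
  "is_diagonal A \<longleftrightarrow> (\<forall>i j. i \<noteq> j \<longrightarrow> A $ i $ j = 0)"

definition qtrace :: "qmat \<Rightarrow> complex" where
  "qtrace A = (\<Sum>i\<in>UNIV. A $ i $ i)"

definition psd :: "qmat \<Rightarrow> bool" where
  "psd A \<longleftrightarrow> (\<forall>v :: complex ^ 2.
     (\<Sum>i\<in>UNIV. \<Sum>j\<in>UNIV. cnj (v $ i) * A $ i $ j * v $ j) \<in> \<real> \<and>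
     Re (\<Sum>i\<in>UNIV. \<Sum>j\<in>UNIV. cnj (v $ i) * A $ i $ j * v $ j) \<ge> 0)"

definition density_matrix :: "qmat \<Rightarrow> bool" where
  "density_matrix \<rho> \<longleftrightarrow> adjoint \<rho> = \<rho> \<and> psd \<rho> \<and> qtrace \<rho> = 1"

definition kraus_complete :: "qmat list \<Rightarrow> bool" where
  "kraus_complete Ks \<longleftrightarrow> (\<Sum>K\<leftarrow>Ks. adjoint K ** K) = mat 1"

definition apply_kraus :: "qmat list \<Rightarrow> qmat \<Rightarrow> qmat" where
  "apply_kraus Ks \<rho> = (\<Sum>K\<leftarrow>Ks. K ** \<rho> ** adjoint K)"

definition incoherent_op :: "qmat list \<Rightarrow> bool" where
  "incoherent_op Ks \<longleftrightarrow> kraus_complete Ks \<and>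
     (\<forall>K\<in>set Ks. \<forall>\<delta>. is_diagonal \<delta> \<longrightarrow> is_diagonal (K ** \<delta> ** adjoint K))"

definition strictly_incoherent_op :: "qmat list \<Rightarrow> bool" where
  "strictly_incoherent_op Ks \<longleftrightarrow> incoherent_op Ks \<and>
     (\<forall>K\<in>set Ks. \<forall>\<delta>. is_diagonal \<delta> \<longrightarrow> is_diagonal (adjoint K ** \<delta> ** K))"

end

theory Submission
  imports Defs
begin

lemma mm_entry: "((A::qmat) ** (B::qmat)) $ i $ j = A$i$1*B$1$j + A$i$2*B$2$j"
  by (simp add: matrix_matrix_mult_def sum_2)
lemma adj_entry[simp]: "adjoint A $ i $ j = cnj (A $ j $ i)"
  by (simp add: adjoint_def)
lemma one_ne_two[simp]: "(1::2) \<noteq> 2" "(2::2) \<noteq> 1" by auto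
lemma diag_iff: "is_diagonal A \<longleftrightarrow> A$1$2 = 0 \<and> A$2$1 = 0"
  unfolding is_diagonal_def forall_2 by auto

lemma mat_eq2: "(A::qmat) = B \<longleftrightarrow> A$1$1 = B$1$1 \<and> A$1$2 = B$1$2 \<and> A$2$1 = B$2$1 \<and> A$2$2 = B$2$2"
  by (simp add: vec_eq_iff forall_2)

definition ej :: "2 \<Rightarrow> qmat" where "ej j = (\<chi> a b. if a = j \<and> b = j then 1 else 0)"

lemma ej_simps[simp]: "ej 1 $ 1 $ 1 = 1" "ej 1 $ 1 $ 2 = 0" "ej 1 $ 2 $ 1 = 0" "ej 1 $ 2 $ 2 = 0"
  "ej 2 $ 1 $ 1 = 0" "ej 2 $ 1 $ 2 = 0" "ej 2 $ 2 $ 1 = 0" "ej 2 $ 2 $ 2 = 1"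
  by (simp_all add: ej_def)

lemma bad_diag:
  assumes io: "\<forall>\<delta>. is_diagonal \<delta> \<longrightarrow> is_diagonal (K ** \<delta> ** adjoint K)"
    and ng: "\<not> (\<forall>\<delta>. is_diagonal \<delta> \<longrightarrow> is_diagonal (adjoint K ** \<delta> ** K))"
  shows "is_diagonal (K ** \<rho> ** adjoint K)"
proof -
  have d1: "is_diagonal (ej 1)" "is_diagonal (ej 2)" by (auto simp: diag_iff)
  have c1: "K$1$1 = 0 \<or> K$2$1 = 0" using io[rule_format, OF d1(1)]
    by (simp add: diag_iff mm_entry)
  have c2: "K$1$2 = 0 \<or> K$2$2 = 0" using io[rule_format, OF d1(2)]
    by (simp add: diag_iff mm_entry)
  from ng obtain \<delta> where "is_diagonal \<delta>" "\<not> is_diagonal (adjoint K ** \<delta> ** K)"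
    by blast
  then have "(K$1$1 \<noteq> 0 \<and> K$1$2 \<noteq> 0) \<or> (K$2$1 \<noteq> 0 \<and> K$2$2 \<noteq> 0)"
    by (auto simp: diag_iff mm_entry)
  then show ?thesis
  proof
    assume "K$1$1 \<noteq> 0 \<and> K$1$2 \<noteq> 0"
    then have "K$2$1 = 0" "K$2$2 = 0" using c1 c2 by auto
    then show ?thesis by (simp add: diag_iff mm_entry)
  next
    assume "K$2$1 \<noteq> 0 \<and> K$2$2 \<noteq> 0"
    then have "K$1$1 = 0" "K$1$2 = 0" using c1 c2 by auto
    then show ?thesis by (simp add: diag_iff mm_entry)
  qed
qed

lemma sum_list_entry: "(\<Sum>x\<leftarrow>xs. (f x :: qmat)) $ i $ j = (\<Sum>x\<leftarrow>xs. f x $ i $ j)"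
  by (induction xs) auto

lemma sum_list_split: "(\<Sum>x\<leftarrow>xs. (f x :: qmat)) = (\<Sum>x\<leftarrow>filter P xs. f x) + (\<Sum>x\<leftarrow>filter (\<lambda>x. \<not> P x) xs. f x)"
  by (induction xs) (auto simp: algebra_simps)

lemma sum_list_zero: "(\<And>x. x \<in> set xs \<Longrightarrow> f x = 0) \<Longrightarrow> (\<Sum>x\<leftarrow>xs. (f x::'a::monoid_add)) = 0"
  by (induction xs) auto

lemma sum_list_of_real: "(\<Sum>x\<leftarrow>xs. complex_of_real (g x)) = complex_of_real (\<Sum>x\<leftarrow>xs. g x)"
  by (induction xs) auto

lemma psd_entry:
  assumes "psd \<rho>"
  shows "(K ** \<rho> ** adjoint K) $ i $ i = complex_of_real (Re ((K ** \<rho> ** adjoint K) $ i $ i))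
       \<and> Re ((K ** \<rho> ** adjoint K) $ i $ i) \<ge> 0"
proof -
  define v :: "complex^2" where "v = (\<chi> j. cnj (K$i$j))"
  have e: "(\<Sum>a\<in>UNIV. \<Sum>b\<in>UNIV. cnj (v $ a) * \<rho> $ a $ b * v $ b) = (K ** \<rho> ** adjoint K) $ i $ i"
    by (simp add: v_def sum_2 mm_entry algebra_simps)
  from assms have "(K ** \<rho> ** adjoint K) $ i $ i \<in> \<real>" "Re ((K ** \<rho> ** adjoint K) $ i $ i) \<ge> 0"
  proof -
    from assms have "(\<Sum>a\<in>UNIV. \<Sum>b\<in>UNIV. cnj (v $ a) * \<rho> $ a $ b * v $ b) \<in> \<real> \<and>
       Re (\<Sum>a\<in>UNIV. \<Sum>b\<in>UNIV. cnj (v $ a) * \<rho> $ a $ b * v $ b) \<ge> 0"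
      unfolding psd_def by blast
    then show "(K ** \<rho> ** adjoint K) $ i $ i \<in> \<real>" "Re ((K ** \<rho> ** adjoint K) $ i $ i) \<ge> 0"
      unfolding e by auto
  qed
  then show ?thesis by (simp add: complex_eq_iff complex_is_Real_iff)
qed

lemma gram_entry: "(adjoint K ** K) $ j $ j = complex_of_real ((cmod (K$1$j))^2 + (cmod (K$2$j))^2)"
  by (simp add: mm_entry mult.commute flip: complex_norm_square)

definition mk :: "2 \<Rightarrow> 2 \<Rightarrow> complex \<Rightarrow> qmat" where
  "mk i j s = (\<chi> a b. if a = i \<and> b = j then s else 0)"

lemma mk_io: "is_diagonal \<delta> \<Longrightarrow> is_diagonal (mk i j s ** \<delta> ** adjoint (mk i j s))"
  using exhaust_2[of i] exhaust_2[of j] by (elim disjE) (simp_all add: diag_iff mm_entry mk_def)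
lemma mk_sio: "is_diagonal \<delta> \<Longrightarrow> is_diagonal (adjoint (mk i j s) ** \<delta> ** mk i j s)"
  using exhaust_2[of i] exhaust_2[of j] by (elim disjE) (simp_all add: diag_iff mm_entry mk_def)

lemma main:
  assumes dm: "density_matrix \<rho>" and io: "incoherent_op Ks"
  shows "\<exists>Ks'. strictly_incoherent_op Ks' \<and> apply_kraus Ks' \<rho> = apply_kraus Ks \<rho>"
proof -
  define g where "g = (\<lambda>K. \<forall>\<delta>. is_diagonal \<delta> \<longrightarrow> is_diagonal (adjoint K ** \<delta> ** K))"
  define G where "G = filter g Ks"
  define B where "B = filter (\<lambda>K. \<not> g K) Ks"
  have psd: "psd \<rho>" using dm density_matrix_def by blast
  have ioK: "\<And>K \<delta>. K \<in> set Ks \<Longrightarrow> is_diagonal \<delta> \<Longrightarrow> is_diagonal (K ** \<delta> ** adjoint K)"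
    using io incoherent_op_def by blast
  have bdiag: "\<And>K. K \<in> set B \<Longrightarrow> is_diagonal (K ** \<rho> ** adjoint K)"
    using bad_diag ioK unfolding B_def g_def by auto
  have dm1: "is_diagonal (mat 1)" by (simp add: diag_iff mat_def)
  have gdiag: "\<And>K. K \<in> set G \<Longrightarrow> is_diagonal (adjoint K ** K)"
  proof -
    fix K assume "K \<in> set G"
    then have "g K" by (simp add: G_def)
    then have "is_diagonal (adjoint K ** mat 1 ** K)" using dm1 unfolding g_def by blast
    then show "is_diagonal (adjoint K ** K)" by (simp add: matrix_mul_rid)
  qed
  define MG where "MG = (\<Sum>K\<leftarrow>G. adjoint K ** K)"
  define MB where "MB = (\<Sum>K\<leftarrow>B. adjoint K ** K)"
  define OG where "OG = (\<Sum>K\<leftarrow>G. K ** \<rho> ** adjoint K)"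
  define OB where "OB = (\<Sum>K\<leftarrow>B. K ** \<rho> ** adjoint K)"
  have tot: "MG + MB = mat 1"
    using io sum_list_split[of "\<lambda>K. adjoint K ** K" Ks g]
    unfolding incoherent_op_def kraus_complete_def MG_def MB_def G_def B_def by simp
  have app: "apply_kraus Ks \<rho> = OG + OB"
    using sum_list_split[of "\<lambda>K. K ** \<rho> ** adjoint K" Ks g]
    unfolding apply_kraus_def OG_def OB_def G_def B_def by simp
  have MG12: "MG$1$2 = 0" "MG$2$1 = 0"
    unfolding MG_def sum_list_entry using gdiag by (auto intro!: sum_list_zero simp: diag_iff)
  have MB12: "MB$1$2 = 0" "MB$2$1 = 0"
    using arg_cong[OF tot, of "\<lambda>M. M$1$2"] arg_cong[OF tot, of "\<lambda>M. M$2$1"] MG12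
    by (simp_all add: mat_def)
  have OB12: "OB$1$2 = 0" "OB$2$1 = 0"
    unfolding OB_def sum_list_entry using bdiag by (auto intro!: sum_list_zero simp: diag_iff)
  define r0 where "r0 = (\<Sum>K\<leftarrow>B. (cmod (K$1$1))^2 + (cmod (K$2$1))^2)"
  define r1 where "r1 = (\<Sum>K\<leftarrow>B. (cmod (K$1$2))^2 + (cmod (K$2$2))^2)"
  have MB11: "MB$1$1 = of_real r0" "MB$2$2 = of_real r1"
    unfolding MB_def r0_def r1_def sum_list_entry gram_entry sum_list_of_real by simp_all
  have r0: "r0 \<ge> 0" "r1 \<ge> 0" unfolding r0_def r1_def
    by (auto intro!: sum_list_nonneg)
  define x where "x = (\<Sum>K\<leftarrow>B. Re ((K ** \<rho> ** adjoint K)$1$1))"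
  define y where "y = (\<Sum>K\<leftarrow>B. Re ((K ** \<rho> ** adjoint K)$2$2))"
  have OB11: "OB$1$1 = of_real x" "OB$2$2 = of_real y"
  proof -
    have "OB$1$1 = (\<Sum>K\<leftarrow>B. complex_of_real (Re ((K ** \<rho> ** adjoint K)$1$1)))"
      unfolding OB_def sum_list_entry
      by (rule arg_cong[where f=sum_list], rule map_cong[OF refl], rule conjunct1[OF psd_entry[OF psd]])
    then show "OB$1$1 = of_real x" unfolding x_def sum_list_of_real .
    have "OB$2$2 = (\<Sum>K\<leftarrow>B. complex_of_real (Re ((K ** \<rho> ** adjoint K)$2$2)))"
      unfolding OB_def sum_list_entry
      by (rule arg_cong[where f=sum_list], rule map_cong[OF refl], rule conjunct1[OF psd_entry[OF psd]])
    then show "OB$2$2 = of_real y" unfolding y_def sum_list_of_real .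
  qed
  have xy: "x \<ge> 0" "y \<ge> 0" unfolding x_def y_def using psd_entry[OF psd]
    by (auto intro!: sum_list_nonneg)
  have "OB$1$1 + OB$2$2 = (\<Sum>K\<leftarrow>B. (K**\<rho>**adjoint K)$1$1 + (K**\<rho>**adjoint K)$2$2)"
    by (simp add: OB_def sum_list_entry sum_list_addf)
  also have "\<dots> = (\<Sum>K\<leftarrow>B. (adjoint K ** K)$1$1 * \<rho>$1$1 + (adjoint K ** K)$1$2 * \<rho>$2$1
      + (adjoint K ** K)$2$1 * \<rho>$1$2 + (adjoint K ** K)$2$2 * \<rho>$2$2)"
    by (rule arg_cong[where f=sum_list], rule map_cong, simp, simp add: mm_entry algebra_simps)
  also have "\<dots> = MB$1$1*\<rho>$1$1 + MB$1$2*\<rho>$2$1 + MB$2$1*\<rho>$1$2 + MB$2$2*\<rho>$2$2"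
    by (simp add: MB_def sum_list_entry sum_list_addf sum_list_mult_const)
  finally have tr: "of_real x + of_real y = of_real r0 * \<rho>$1$1 + of_real r1 * \<rho>$2$2"
    using MB12 MB11 OB11 by simp
  define l where "l = (if x + y = 0 then 0 else x / (x+y))"
  have l: "0 \<le> l" "l \<le> 1" using xy by (auto simp: l_def)
  have lx: "of_real l * (of_real x + of_real y) = complex_of_real x"
  proof -
    have "l*(x+y) = x" using xy by (auto simp: l_def)
    then have "complex_of_real (l*(x+y)) = of_real x" by simp
    then show ?thesis by simp
  qed
  have ly: "of_real (1-l) * (of_real x + of_real y) = complex_of_real y"
  proof -
    have "l*(x+y) = x" using xy by (auto simp: l_def)
    then have "(1-l)*(x+y) = y" by (simp add: algebra_simps)
    then have "complex_of_real ((1-l)*(x+y)) = of_real y" by simp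
    then show ?thesis by simp
  qed
  have pos: "l*r0 \<ge> 0" "l*r1 \<ge> 0" "(1-l)*r0 \<ge> 0" "(1-l)*r1 \<ge> 0" using l r0 by auto
  define a1 where "a1 = complex_of_real (sqrt (l*r0))"
  define a2 where "a2 = complex_of_real (sqrt (l*r1))"
  define a3 where "a3 = complex_of_real (sqrt ((1-l)*r0))"
  define a4 where "a4 = complex_of_real (sqrt ((1-l)*r1))"
  have sq: "\<And>a. a \<ge> 0 \<Longrightarrow> complex_of_real (sqrt a) * complex_of_real (sqrt a) = complex_of_real a"
    by (simp flip: of_real_mult)
  have ac: "cnj a1 = a1" "cnj a2 = a2" "cnj a3 = a3" "cnj a4 = a4"
    by (simp_all add: a1_def a2_def a3_def a4_def)
  have aa: "a1 * a1 = of_real (l*r0)" "a2 * a2 = of_real (l*r1)" "a3 * a3 = of_real ((1-l)*r0)" "a4 * a4 = of_real ((1-l)*r1)"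
    unfolding a1_def a2_def a3_def a4_def using sq pos by auto
  define N where "N = [mk 1 1 a1, mk 1 2 a2, mk 2 1 a3, mk 2 2 a4]"
  have NM0: "(\<Sum>K\<leftarrow>N. adjoint K ** K)$1$1 = a1 * a1 + a3 * a3"
     "(\<Sum>K\<leftarrow>N. adjoint K ** K)$2$2 = a2 * a2 + a4 * a4"
     "(\<Sum>K\<leftarrow>N. adjoint K ** K)$1$2 = 0" "(\<Sum>K\<leftarrow>N. adjoint K ** K)$2$1 = 0"
    by (simp_all add: N_def mm_entry mk_def ac)
  have NM: "(\<Sum>K\<leftarrow>N. adjoint K ** K) = MB"
    unfolding mat_eq2 NM0 aa using MB12 MB11 by (simp flip: of_real_add add: algebra_simps)
  have e0: "(\<Sum>K\<leftarrow>N. K ** \<rho> ** adjoint K)$1$1 = a1 * a1 * \<rho>$1$1 + a2 * a2 * \<rho>$2$2"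
     "(\<Sum>K\<leftarrow>N. K ** \<rho> ** adjoint K)$2$2 = a3 * a3 * \<rho>$1$1 + a4 * a4 * \<rho>$2$2"
     "(\<Sum>K\<leftarrow>N. K ** \<rho> ** adjoint K)$1$2 = 0" "(\<Sum>K\<leftarrow>N. K ** \<rho> ** adjoint K)$2$1 = 0"
    by (simp_all add: N_def mm_entry mk_def ac algebra_simps)
  have e1: "a1 * a1 * \<rho>$1$1 + a2 * a2 * \<rho>$2$2 = of_real l * (of_real r0 * \<rho>$1$1 + of_real r1 * \<rho>$2$2)"
    "a3 * a3 * \<rho>$1$1 + a4 * a4 * \<rho>$2$2 = of_real (1-l) * (of_real r0 * \<rho>$1$1 + of_real r1 * \<rho>$2$2)"
    unfolding aa of_real_mult by (simp_all only: algebra_simps)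
  have NO: "(\<Sum>K\<leftarrow>N. K ** \<rho> ** adjoint K) = OB"
    unfolding mat_eq2 e0 e1 tr[symmetric] lx ly using OB12 OB11 by simp
  show ?thesis
  proof (intro exI conjI)
    show "apply_kraus (G @ N) \<rho> = apply_kraus Ks \<rho>"
      using app NO unfolding apply_kraus_def OG_def by simp
    have "kraus_complete (G @ N)"
      using tot NM unfolding kraus_complete_def MG_def by simp
    moreover have "\<forall>K\<in>set (G @ N). \<forall>\<delta>. is_diagonal \<delta> \<longrightarrow> is_diagonal (K ** \<delta> ** adjoint K)"
      using ioK mk_io unfolding G_def N_def by auto
    moreover have "\<forall>K\<in>set (G @ N). \<forall>\<delta>. is_diagonal \<delta> \<longrightarrow> is_diagonal (adjoint K ** \<delta> ** K)"
      using mk_sio unfolding G_def N_def g_def by auto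
    ultimately show "strictly_incoherent_op (G @ N)"
      unfolding strictly_incoherent_op_def incoherent_op_def by blast
  qed
qed
theorem theorem1:
  fixes \<rho> :: qmat
  assumes "density_matrix \<rho>"
  shows "(\<forall>Ks. incoherent_op Ks \<longrightarrow>
            (\<exists>Ks'. strictly_incoherent_op Ks' \<and> apply_kraus Ks' \<rho> = apply_kraus Ks \<rho>))
       \<and> {apply_kraus Ks \<rho> | Ks. incoherent_op Ks}
           = {apply_kraus Ks \<rho> | Ks. strictly_incoherent_op Ks}"
proof (intro conjI allI impI)
  fix Ks assume "incoherent_op Ks"
  then show "\<exists>Ks'. strictly_incoherent_op Ks' \<and> apply_kraus Ks' \<rho> = apply_kraus Ks \<rho>"
    using main assms by blast
next
  show "{apply_kraus Ks \<rho> | Ks. incoherent_op Ks} = {apply_kraus Ks \<rho> | Ks. strictly_incoherent_op Ks}"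
  proof
    show "{apply_kraus Ks \<rho> | Ks. incoherent_op Ks} \<subseteq> {apply_kraus Ks \<rho> | Ks. strictly_incoherent_op Ks}"
    proof
      fix X assume "X \<in> {apply_kraus Ks \<rho> | Ks. incoherent_op Ks}"
      then obtain Ks where "X = apply_kraus Ks \<rho>" "incoherent_op Ks" by blast
      then obtain Ks' where "strictly_incoherent_op Ks'" "apply_kraus Ks' \<rho> = X"
        using main[OF assms] by metis
      then show "X \<in> {apply_kraus Ks \<rho> | Ks. strictly_incoherent_op Ks}" by blast
    qed
    show "{apply_kraus Ks \<rho> | Ks. strictly_incoherent_op Ks} \<subseteq> {apply_kraus Ks \<rho> | Ks. incoherent_op Ks}"
      unfolding strictly_incoherent_op_def by blast
  qed
qed

end
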